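(* Let $P$ be a distribution on $\mathcal X\times\mathcal Y$, where every $\mathbf x\in\mathcal X\subseteq\mathbb R^d$ satisfies $\|\mathbf x\|\le1$ and $\mathcal Y=\{-1,+1\}$ or $[-1,1]$, and let $(\mathbf x_1,y_1),\dots,(\mathbf x_n,y_n)$ be i.i.d. from $P$. Let $R>0$, $\mathscr W=\{\mathbf w\in\mathbb R^d:\|\mathbf w\|\le R\}$, let $\ell:\mathbb R\to\mathbb R_+$ be a convex, $\alpha$-exp-concave on $|z|\le R$, $G$-Lipschitz loss, and $\mathbf w_*\in\arg\min_{\mathscr W}\mathrm E[\ell(y\mathbf w^\top\mathbf x)]$. For $\mathbf w\in\mathscr W$ let $\rho(\mathbf w)=\frac1{2R}\sqrt{\mathrm E[(\mathbf x^\top(\mathbf w-\mathbf w_* ))^2]}$. For $\rho>0$ define $\Delta=\{\mathbf w\in\mathscr W:\rho(\mathbf w)\le\rho\}$. Then for any $t>0$, with probability at least $1-e^{-t}$, \[ \frac1n\sup_{\mathbf w\in\Delta}\sum_{i=1}^n\left[\mathbf x_i^\top(\mathbf w-\mathbf w_* )\right]^2\le10R^2\left(\rho^2+\frac{t+1+d\log n}{n}\right). \]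
   Context: $\alpha$-exp-concave means $z\mapsto\exp(-\alpha\ell(z))$ is concave; $G$-Lipschitz means $|\ell'(z)|\le G$. Expectations are over $(\mathbf x,y)\sim P$. *)

theory Defs
  imports "HOL-Probability.Probability"
begin

definition exp_risk :: "('a::euclidean_space \<times> real) measure \<Rightarrow> (real \<Rightarrow> real) \<Rightarrow> 'a \<Rightarrow> real" where
  "exp_risk P l w = (\<integral>z. l (snd z * (w \<bullet> fst z)) \<partial>P)"

definition rho_dist :: "('a::euclidean_space \<times> real) measure \<Rightarrow> real \<Rightarrow> 'a \<Rightarrow> 'a \<Rightarrow> real" where
  "rho_dist P R wstar w = (1 / (2 * R)) * sqrt (\<integral>z. (fst z \<bullet> (w - wstar))^2 \<partial>P)"

end

theory Submission
  imports Defs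
begin


lemma exp_le_lin: fixes x :: real assumes "0 \<le> x" "x \<le> 1" shows "exp x \<le> 1 + (exp 1 - 1) * x"
proof -
  have "exp ((1 - x) *\<^sub>R 0 + x *\<^sub>R 1) \<le> (1 - x) * exp 0 + x * exp 1"
    by (rule convex_onD[OF exp_convex]) (use assms in auto)
  thus ?thesis by (simp add: algebra_simps)
qed

lemma chernoff:
  fixes P :: "'b measure" and f :: "'b \<Rightarrow> real" and n :: nat and s :: real
  assumes P: "prob_space P" and fm: "f \<in> borel_measurable P"
    and fb: "\<And>z. 0 \<le> f z \<and> f z \<le> 1"
  shows "measure (PiM {..<n} (\<lambda>_. P))
     {S \<in> space (PiM {..<n} (\<lambda>_. P)). (exp 1 - 1) * real n * (\<integral>z. f z \<partial>P) + s \<le> (\<Sum>i<n. f (S i))}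
     \<le> exp (- s)"
proof -
  interpret P: prob_space P by (rule P)
  interpret PP: product_prob_space "\<lambda>_. P" "{..<n}" by unfold_locales
  let ?M = "PiM {..<n} (\<lambda>_. P)"
  interpret M: prob_space ?M by (rule prob_space_PiM) (use P in auto)
  define \<mu> where "\<mu> = (\<integral>z. f z \<partial>P)"
  define c where "c = (exp 1 - 1) * real n * \<mu> + s"
  let ?A = "{S \<in> space ?M. c \<le> (\<Sum>i<n. f (S i))}"
  have fm': "(\<lambda>S. f (S i)) \<in> borel_measurable ?M" if "i < n" for i
    using measurable_compose[OF measurable_component_singleton[of i "{..<n}" "\<lambda>_. P"] fm] that by simp
  have Am: "?A \<in> sets ?M" using fm' by measurable
  have int_f: "integrable P f"
    by (rule P.integrable_const_bound[where B=1]) (use fb fm in auto)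
  have "emeasure ?M ?A = (\<integral>\<^sup>+ S. indicator ?A S \<partial>?M)" using Am by simp
  also have "\<dots> \<le> (\<integral>\<^sup>+ S. ennreal (exp (- c)) * (\<Prod>i<n. ennreal (exp (f (S i)))) \<partial>?M)"
  proof (rule nn_integral_mono)
    fix S assume "S \<in> space ?M"
    have "indicator ?A S \<le> ennreal (exp ((\<Sum>i<n. f (S i)) - c))"
      by (auto simp: indicator_def)
    also have "exp ((\<Sum>i<n. f (S i)) - c) = exp (- c) * (\<Prod>i<n. exp (f (S i)))"
      by (simp add: exp_diff exp_sum field_simps exp_minus)
    finally show "indicator ?A S \<le> ennreal (exp (- c)) * (\<Prod>i<n. ennreal (exp (f (S i))))"
      by (simp add: ennreal_mult prod_ennreal prod_nonneg)
  qed
  also have "\<dots> = ennreal (exp (- c)) * (\<integral>\<^sup>+ S. (\<Prod>i<n. ennreal (exp (f (S i)))) \<partial>?M)"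
    by (rule nn_integral_cmult) (use fm' in measurable)
  also have "(\<integral>\<^sup>+ S. (\<Prod>i<n. ennreal (exp (f (S i)))) \<partial>?M) = (\<Prod>i<n. \<integral>\<^sup>+ z. ennreal (exp (f z)) \<partial>P)"
    by (rule PP.product_nn_integral_prod[where f="\<lambda>_ z. ennreal (exp (f z))"]) (use fm in auto)
  also have "ennreal (exp (- c)) * (\<Prod>i<n. \<integral>\<^sup>+ z. ennreal (exp (f z)) \<partial>P)
      \<le> ennreal (exp (- c)) * (\<Prod>i<n. ennreal (exp ((exp 1 - 1) * \<mu>)))"
  proof -
    have "(\<integral>\<^sup>+ z. ennreal (exp (f z)) \<partial>P) \<le> (\<integral>\<^sup>+ z. ennreal (1 + (exp 1 - 1) * f z) \<partial>P)"
      by (intro nn_integral_mono ennreal_leI exp_le_lin) (use fb in auto)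
    also have "\<dots> = ennreal (\<integral>z. 1 + (exp 1 - 1) * f z \<partial>P)"
      by (rule nn_integral_eq_integral) (use int_f fb in auto)
    also have "\<dots> = ennreal (1 + (exp 1 - 1) * \<mu>)"
      using int_f by (simp add: \<mu>_def P.prob_space)
    also have "\<dots> \<le> ennreal (exp ((exp 1 - 1) * \<mu>))"
      by (intro ennreal_leI exp_ge_add_one_self)
    finally have "(\<integral>\<^sup>+ z. ennreal (exp (f z)) \<partial>P) \<le> ennreal (exp ((exp 1 - 1) * \<mu>))" .
    hence "(\<Prod>i<n. \<integral>\<^sup>+ z. ennreal (exp (f z)) \<partial>P) \<le> (\<Prod>i<n. ennreal (exp ((exp 1 - 1) * \<mu>)))"
      by (simp add: power_mono)
    thus ?thesis by (rule mult_left_mono) simp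
  qed
  also have "\<dots> = ennreal (exp (- s))"
  proof -
    have "ennreal (exp ((exp 1 - 1) * \<mu>)) ^ n = ennreal (exp ((exp 1 - 1) * \<mu>) ^ n)"
      by (simp add: ennreal_power)
    also have "exp ((exp 1 - 1) * \<mu>) ^ n = exp (real n * ((exp 1 - 1) * \<mu>))"
      by (simp add: exp_of_nat_mult)
    finally have "ennreal (exp (- c)) * (\<Prod>i<n. ennreal (exp ((exp 1 - 1) * \<mu>)))
       = ennreal (exp (- c) * exp (real n * ((exp 1 - 1) * \<mu>)))"
      by (simp add: ennreal_mult)
    also have "exp (- c) * exp (real n * ((exp 1 - 1) * \<mu>)) = exp (- s)"
      by (simp add: exp_add[symmetric] c_def algebra_simps)
    finally show ?thesis .
  qed
  finally have "emeasure ?M ?A \<le> ennreal (exp (- s))" by simp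
  thus ?thesis unfolding c_def \<mu>_def measure_def by (intro enn2real_leI) auto
qed



lemma e_le: "exp (1::real) \<le> 272/100"
  using e_approx_32 by (simp add: abs_if split: if_splits)

lemma e_ge: "exp (1::real) \<ge> 27/10"
  using e_approx_32 by (simp add: abs_if split: if_splits)

lemma exp_nat_le: "exp (real k) \<le> (272/100::real) ^ k"
proof -
  have "exp (real k) = exp 1 ^ k" by (simp add: exp_of_nat_mult[symmetric])
  also have "\<dots> \<le> (272/100) ^ k" by (rule power_mono[OF e_le]) simp
  finally show ?thesis .
qed

lemma ln_ge_frac: fixes a :: real and m :: nat and k :: nat
  assumes "m > 0" "(272/100::real) ^ k \<le> a ^ m" "a > 0"
  shows "real k / real m \<le> ln a"
proof -
  have "exp (real k / real m) ^ m = exp (real k)"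
    using assms by (simp add: exp_of_nat_mult[symmetric])
  also have "\<dots> \<le> a ^ m" using exp_nat_le assms order_trans by blast
  finally have "exp (real k / real m) \<le> a"
    using power_mono_iff[of "exp (real k / real m)" a m] assms by simp
  thus ?thesis using assms by (simp add: ln_ge_iff)
qed

lemma small_n: fixes n :: nat assumes "1 \<le> n" "n \<le> 7"
  shows "2 * real n \<le> 5 * (1 + ln (real n))"
proof -
  have "n \<in> {1,2,3,4,5,6,7}" using assms by auto
  moreover have "1 \<le> ln (3::real)" using ln_ge_frac[of 1 1 3] by simp
  moreover have "1 \<le> ln (4::real)" using ln_ge_frac[of 1 1 4] by simp
  moreover have "1 \<le> ln (5::real)" using ln_ge_frac[of 1 1 5] by simp
  moreover have "7/5 \<le> ln (6::real)" using ln_ge_frac[of 5 7 6] by (simp add: power_divide)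
  moreover have "9/5 \<le> ln (7::real)" using ln_ge_frac[of 5 9 7] by (simp add: power_divide)
  moreover have "0 \<le> ln (2::real)" by simp
  ultimately show ?thesis by auto
qed

lemma big_n: fixes n :: nat assumes "8 \<le> n"
  shows "7/5 * ln (2 * real n + 1) + 7 / (2 * real n) \<le> 5/2 * ln (real n)"
proof -
  have n0: "real n \<ge> 8" using assms by simp
  have "2 \<le> ln (8::real)" using ln_ge_frac[of 1 2 8] by (simp add: power_divide)
  also have "\<dots> \<le> ln (real n)" using n0 by simp
  finally have l2: "2 \<le> ln (real n)" .
  have "2 * real n + 1 = real n * (2 + 1 / real n)" using n0 by (simp add: field_simps)
  hence "ln (2 * real n + 1) = ln (real n * (2 + 1 / real n))" by simp
  also have "\<dots> = ln (real n) + ln (2 + 1 / real n)" using n0 by (intro ln_mult_pos) (auto simp: add_pos_nonneg)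
  also have "ln (2 + 1 / real n) \<le> ln (exp 1)"
  proof -
    have "1 / real n \<le> 1/8" using n0 by (simp add: field_simps)
    hence "2 + 1 / real n \<le> exp 1" using e_ge by linarith
    thus ?thesis using n0 by (subst ln_le_cancel_iff) (auto simp: add_pos_nonneg)
  qed
  finally have l1: "ln (2 * real n + 1) \<le> ln (real n) + 1" by simp
  have "7 / (2 * real n) \<le> 7/16" using n0 by (simp add: field_simps)
  thus ?thesis using l1 l2 by linarith
qed



lemma sq_split: fixes a b :: real shows "(a + b)^2 \<le> 7/5 * a^2 + 7/2 * b^2"
proof -
  have "0 \<le> (2/5) * (a - 5/2 * b)^2" by simp
  moreover have "(a + b)^2 = a^2 + 2*a*b + b^2" "(2/5) * (a - 5/2 * b)^2 = 2/5*a^2 - 2*a*b + 5/2*b^2"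
    by (simp_all add: power2_eq_square algebra_simps)
  ultimately show ?thesis by linarith
qed

lemma floor_close: fixes p q h :: real assumes "h > 0" "\<lfloor>p / h\<rfloor> = \<lfloor>q / h\<rfloor>"
  shows "\<bar>p - q\<bar> \<le> h"
proof -
  have a1: "real_of_int \<lfloor>p / h\<rfloor> \<le> p / h" "p / h < real_of_int \<lfloor>p / h\<rfloor> + 1"
    using floor_correct[of "p / h"] by simp_all
  have a2: "real_of_int \<lfloor>q / h\<rfloor> \<le> q / h" "q / h < real_of_int \<lfloor>q / h\<rfloor> + 1"
    using floor_correct[of "q / h"] by simp_all
  have k2: "real_of_int \<lfloor>p / h\<rfloor> = real_of_int \<lfloor>q / h\<rfloor>" using assms(2) by (rule arg_cong)
  have "\<bar>p / h - q / h\<bar> \<le> 1" using a1 a2 k2 by linarith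
  hence "\<bar>(p - q) / h\<bar> \<le> 1" by (metis diff_divide_distrib)
  moreover have "\<bar>(p - q) / h\<bar> = \<bar>p - q\<bar> / h" using assms(1) by (simp add: abs_divide abs_of_pos)
  ultimately have "\<bar>p - q\<bar> / h \<le> 1" by metis
  thus ?thesis using pos_divide_le_eq[OF assms(1)] by simp
qed

lemma sup_bound: fixes g :: "'a \<Rightarrow> real"
  assumes "U \<noteq> {}" "n \<ge> 1" "\<And>w. w \<in> U \<Longrightarrow> g w \<le> real n * B"
  shows "(1 / real n) * (SUP w\<in>U. g w) \<le> B"
proof -
  have "(SUP w\<in>U. g w) \<le> real n * B" by (rule cSUP_least) (use assms in auto)
  hence "(1 / real n) * (SUP w\<in>U. g w) \<le> (1 / real n) * (real n * B)"
    by (rule mult_left_mono) simp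
  thus ?thesis using assms(2) by simp
qed

lemma sum_event_sets:
  fixes P :: "'b measure" and f :: "'b \<Rightarrow> real"
  assumes fm: "f \<in> borel_measurable P"
  shows "{S \<in> space (PiM {..<n} (\<lambda>_. P)). c \<le> (\<Sum>i<n. f (S i))} \<in> sets (PiM {..<n} (\<lambda>_. P))"
proof -
  have fm': "(\<lambda>S. f (S i)) \<in> borel_measurable (PiM {..<n} (\<lambda>_. P))" if "i < n" for i
    using measurable_compose[OF measurable_component_singleton[of i "{..<n}" "\<lambda>_. P"] fm] that by simp
  have g: "(\<lambda>S. \<Sum>i<n. f (S i)) \<in> borel_measurable (PiM {..<n} (\<lambda>_. P))"
    by (rule borel_measurable_sum) (use fm' in simp)
  have "{S \<in> space (PiM {..<n} (\<lambda>_. P)). c \<le> (\<Sum>i<n. f (S i))}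
      = (\<lambda>S. \<Sum>i<n. f (S i)) -` {c..} \<inter> space (PiM {..<n} (\<lambda>_. P))" by auto
  also have "\<dots> \<in> sets (PiM {..<n} (\<lambda>_. P))" by (rule measurable_sets[OF g]) simp
  finally show ?thesis .
qed



theorem lemma2:
  fixes P :: "('a::euclidean_space \<times> real) measure"
    and l :: "real \<Rightarrow> real"
    and R \<alpha> G \<rho> t :: real and n :: nat and wstar :: 'a
  assumes P_prob: "prob_space P"
    and P_sets: "sets P = sets borel"
    and P_supp: "AE z in P. norm (fst z) \<le> 1 \<and> \<bar>snd z\<bar> \<le> 1"
    and R_pos: "R > 0"
    and l_nonneg: "\<forall>z. l z \<ge> 0"
    and l_convex: "convex_on UNIV l"
    and alpha_pos: "\<alpha> > 0"
    and l_expconc: "concave_on {-R..R} (\<lambda>z. exp (- \<alpha> * l z))"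
    and l_lip: "G-lipschitz_on UNIV l"
    and wstar_in: "norm wstar \<le> R"
    and wstar_min: "\<forall>w. norm w \<le> R \<longrightarrow> exp_risk P l wstar \<le> exp_risk P l w"
    and rho_pos: "\<rho> > 0"
    and t_pos: "t > 0"
    and n_pos: "n \<ge> 1"
  shows "\<exists>E \<in> sets (PiM {..<n} (\<lambda>_. P)).
           measure (PiM {..<n} (\<lambda>_. P)) E \<ge> 1 - exp (- t) \<and>
           (\<forall>S \<in> E.
              (1 / real n) * (SUP w \<in> {w. norm w \<le> R \<and> rho_dist P R wstar w \<le> \<rho>}.
                  (\<Sum>i<n. (fst (S i) \<bullet> (w - wstar))^2))
              \<le> 10 * R^2 * (\<rho>^2 + (t + 1 + real DIM('a) * ln (real n)) / real n))"
proof -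
  interpret P: prob_space P by (rule P_prob)
  define M where "M = PiM {..<n} (\<lambda>_. P)"
  interpret M: prob_space M unfolding M_def by (rule prob_space_PiM) (use P_prob in auto)
  define D where "D = real DIM('a)"
  define U where "U = {w::'a. norm w \<le> R \<and> rho_dist P R wstar w \<le> \<rho>}"
  define B where "B = 10 * R^2 * (\<rho>^2 + (t + 1 + real DIM('a) * ln (real n)) / real n)"
  have n0: "real n \<ge> 1" using n_pos by simp
  have D1: "D \<ge> 1" unfolding D_def using DIM_positive[where 'a='a] by linarith
  have cont_meas: "f \<in> borel_measurable P" if "continuous_on UNIV f" for f :: "'a \<times> real \<Rightarrow> real"
    by (subst measurable_cong_sets[OF P_sets refl]) (rule borel_measurable_continuous_onI[OF that])
  have wstarU: "wstar \<in> U" unfolding U_def rho_dist_def using wstar_in rho_pos by simp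
  have Une: "U \<noteq> {}" using wstarU by blast
  have vnorm: "norm (w - wstar) \<le> 2 * R" if "w \<in> U" for w
    using that wstar_in norm_triangle_ineq4[of w wstar] unfolding U_def by auto
  define G where "G = {S \<in> space M. \<forall>i\<in>{..<n}. norm (fst (S i)) \<le> 1}"
  have Gm: "G \<in> sets M"
  proof -
    have "{S \<in> space M. norm (fst (S i)) \<le> 1} \<in> sets M" if "i \<in> {..<n}" for i
    proof -
      have cn: "continuous_on UNIV (\<lambda>z::'a \<times> real. norm (fst z))" by (intro continuous_intros)
      have "(\<lambda>S. norm (fst (S i))) \<in> borel_measurable M"
        using cn measurable_compose[OF measurable_component_singleton[of i "{..<n}" "\<lambda>_. P"]
            cont_meas[of "\<lambda>z. norm (fst z)"]] that
        by (auto simp: M_def intro: continuous_intros)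
      hence "(\<lambda>S. norm (fst (S i))) -` {..1} \<inter> space M \<in> sets M" by (rule measurable_sets) simp
      moreover have "{S \<in> space M. norm (fst (S i)) \<le> 1} = (\<lambda>S. norm (fst (S i))) -` {..1} \<inter> space M"
        by auto
      ultimately show ?thesis by simp
    qed
    thus ?thesis unfolding G_def by (intro sets.sets_Collect_finite_All) auto
  qed
  have G1: "measure M G = 1"
  proof -
    have "AE z in P. norm (fst z) \<le> 1" using P_supp by eventually_elim auto
    hence "AE S in M. \<forall>i\<in>{..<n}. norm (fst (S i)) \<le> 1"
      unfolding M_def by (intro eventually_ball_finite ballI AE_PiM_component) (use P_prob in auto)
    thus ?thesis using M.prob_Collect_eq_1 Gm unfolding G_def by simp
  qed
  have term_bd: "(x \<bullet> v)^2 \<le> (norm x * norm v)^2" for x v :: 'a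
  proof -
    have "\<bar>x \<bullet> v\<bar> \<le> norm x * norm v" by (rule Cauchy_Schwarz_ineq2)
    hence "\<bar>x \<bullet> v\<bar>^2 \<le> (norm x * norm v)^2" by (rule power_mono) simp
    thus ?thesis by simp
  qed
  have crude: "(\<Sum>i<n. (fst (S i) \<bullet> (w - wstar))^2) \<le> real n * (4 * R^2)" if "S \<in> G" "w \<in> U" for S w
  proof -
    have "(fst (S i) \<bullet> (w - wstar))^2 \<le> 4 * R^2" if "i < n" for i
    proof -
      have "norm (fst (S i)) \<le> 1" using \<open>S \<in> G\<close> that unfolding G_def by auto
      hence "norm (fst (S i)) * norm (w - wstar) \<le> 1 * (2 * R)"
        using vnorm[OF \<open>w \<in> U\<close>] by (intro mult_mono) auto
      hence "(norm (fst (S i)) * norm (w - wstar))^2 \<le> (2 * R)^2" by (intro power_mono) auto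
      thus ?thesis using term_bd[of "fst (S i)" "w - wstar"] by (simp add: power_mult_distrib)
    qed
    hence "(\<Sum>i<n. (fst (S i) \<bullet> (w - wstar))^2) \<le> (\<Sum>i<n. 4 * R^2)" by (intro sum_mono) auto
    thus ?thesis by simp
  qed
  show ?thesis
  proof (cases "4 * R^2 \<le> B")
    case True
    show ?thesis
    proof (intro bexI[of _ G] conjI ballI)
      show "G \<in> sets (PiM {..<n} (\<lambda>_. P))" using Gm by (simp add: M_def)
      show "measure (PiM {..<n} (\<lambda>_. P)) G \<ge> 1 - exp (- t)" using G1 by (simp add: M_def)
      fix S assume "S \<in> G"
      show "(1 / real n) * (SUP w \<in> {w. norm w \<le> R \<and> rho_dist P R wstar w \<le> \<rho>}.
                  (\<Sum>i<n. (fst (S i) \<bullet> (w - wstar))^2))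
              \<le> 10 * R^2 * (\<rho>^2 + (t + 1 + real DIM('a) * ln (real n)) / real n)"
        unfolding U_def[symmetric] B_def[symmetric]
      proof (rule sup_bound[OF Une n_pos])
        fix w assume "w \<in> U"
        have "real n * (4 * R^2) \<le> real n * B" using True by (intro mult_left_mono) auto
        thus "(\<Sum>i<n. (fst (S i) \<bullet> (w - wstar))^2) \<le> real n * B"
          using crude[OF \<open>S \<in> G\<close> \<open>w \<in> U\<close>] by linarith
      qed
    qed
  next
    case False
    have n8: "n \<ge> 8"
    proof (rule ccontr)
      assume "\<not> n \<ge> 8"
      hence "n \<le> 7" by simp
      hence sm: "2 * real n \<le> 5 * (1 + ln (real n))" using small_n n_pos by blast
      have lnn: "ln (real n) \<ge> 0" using n0 by simp
      have "ln (real n) \<le> real DIM('a) * ln (real n)"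
        using D1 lnn unfolding D_def by (simp add: mult_le_cancel_right1)
      hence "2 * real n \<le> 5 * (t + 1 + real DIM('a) * ln (real n))"
      proof -
        have "ln (real n) \<le> real DIM('a) * ln (real n)" by fact
        thus ?thesis using sm t_pos by (simp add: algebra_simps)
      qed
      hence "2/5 \<le> (t + 1 + real DIM('a) * ln (real n)) / real n" using n0 by (simp add: field_simps)
      hence "2/5 \<le> \<rho>^2 + (t + 1 + real DIM('a) * ln (real n)) / real n"
        using zero_le_power2[of \<rho>] by linarith
      hence "10 * R^2 * (2/5) \<le> B" unfolding B_def by (intro mult_left_mono) auto
      thus False using False by simp
    qed
    define h where "h = 2 * R / real n"
    have h0: "h > 0" unfolding h_def using R_pos n0 by simp
    define \<phi> where "\<phi> w = restrict (\<lambda>b. \<lfloor>((w - wstar) \<bullet> b) / h\<rfloor>) Basis" for w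
    define C where "C = \<phi> ` U"
    have C_sub: "C \<subseteq> PiE Basis (\<lambda>_. {- int n..int n})"
    proof
      fix c assume "c \<in> C"
      then obtain w where w: "w \<in> U" "c = \<phi> w" unfolding C_def by blast
      have "\<lfloor>((w - wstar) \<bullet> b) / h\<rfloor> \<in> {- int n..int n}" if b: "b \<in> Basis" for b
      proof -
        have "\<bar>(w - wstar) \<bullet> b\<bar> \<le> 2 * R" using Basis_le_norm[OF b, of "w - wstar"] vnorm[OF w(1)] by linarith
        hence "\<bar>(w - wstar) \<bullet> b\<bar> / h \<le> 2 * R / h" using h0 by (intro divide_right_mono) auto
        also have "2 * R / h = real n" unfolding h_def using R_pos n0 by (simp add: field_simps)
        finally have "\<bar>((w - wstar) \<bullet> b) / h\<bar> \<le> real n" using h0 by (simp add: abs_divide)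
        hence "- real n \<le> ((w - wstar) \<bullet> b) / h" "((w - wstar) \<bullet> b) / h \<le> real n" by linarith+
        hence "- int n \<le> \<lfloor>((w - wstar) \<bullet> b) / h\<rfloor>" "\<lfloor>((w - wstar) \<bullet> b) / h\<rfloor> \<le> int n"
          by (simp_all add: le_floor_iff floor_le_iff)
        thus ?thesis by simp
      qed
      thus "c \<in> PiE Basis (\<lambda>_. {- int n..int n})" unfolding w(2) \<phi>_def by auto
    qed
    have finC: "finite C" by (rule finite_subset[OF C_sub]) (auto intro!: finite_PiE)
    have cardC: "real (card C) \<le> (2 * real n + 1) ^ DIM('a)"
    proof -
      have "card C \<le> card (PiE Basis (\<lambda>_::'a. {- int n..int n}))"
        by (rule card_mono[OF _ C_sub]) (auto intro!: finite_PiE)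
      also have "\<dots> = (2 * n + 1) ^ DIM('a)" by (simp add: card_PiE nat_add_distrib nat_mult_distrib)
      finally show ?thesis by (simp flip: of_nat_power) (metis of_nat_le_iff of_nat_power of_nat_Suc add.commute mult_2 of_nat_add of_nat_mult)
    qed
    have Cne: "C \<noteq> {}" unfolding C_def using Une by blast
    have cardC1: "real (card C) \<ge> 1" using finC Cne by (simp add: Suc_le_eq card_gt_0_iff)
    define r where "r c = (SOME w. w \<in> U \<and> \<phi> w = c)" for c
    have r: "r c \<in> U \<and> \<phi> (r c) = c" if "c \<in> C" for c
    proof -
      have "\<exists>w. w \<in> U \<and> \<phi> w = c" using that unfolding C_def by blast
      thus ?thesis unfolding r_def by (rule someI_ex)
    qed
    define f :: "('a \<Rightarrow> int) \<Rightarrow> 'a \<times> real \<Rightarrow> real" where "f c z = min 1 ((fst z \<bullet> (r c - wstar))^2 / (4 * R^2))" for c z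
    have fm: "f c \<in> borel_measurable P" for c
      unfolding f_def by (rule cont_meas) (use R_pos in \<open>auto intro!: continuous_intros\<close>)
    have fb: "0 \<le> f c z \<and> f c z \<le> 1" for c z unfolding f_def by auto
    have mu: "(\<integral>z. f c z \<partial>P) \<le> \<rho>^2" if "c \<in> C" for c
    proof -
      define v where "v = r c - wstar"
      have rU: "r c \<in> U" using r[OF that] by blast
      define g :: "'a \<times> real \<Rightarrow> real" where "g z = (fst z \<bullet> v)^2" for z
      have gm: "g \<in> borel_measurable P" unfolding g_def by (rule cont_meas) (intro continuous_intros)
      have gint: "integrable P g"
      proof (rule P.integrable_const_bound[where B="norm v ^ 2"])
        show "AE z in P. norm (g z) \<le> norm v ^ 2" using P_supp
        proof eventually_elim
          fix z :: "'a \<times> real" assume z: "norm (fst z) \<le> 1 \<and> \<bar>snd z\<bar> \<le> 1"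
          have "norm (fst z) * norm v \<le> 1 * norm v" using z by (intro mult_right_mono) auto
          hence "(norm (fst z) * norm v)^2 \<le> (norm v)^2" by (intro power_mono) auto
          hence "(fst z \<bullet> v)^2 \<le> norm v ^ 2" by (rule order_trans[OF term_bd[of "fst z" v]])
          thus "norm (g z) \<le> norm v ^ 2" unfolding g_def by simp
        qed
      qed (rule gm)
      have "rho_dist P R wstar (r c) \<le> \<rho>" using rU unfolding U_def by simp
      hence "(1 / (2 * R)) * sqrt (\<integral>z. g z \<partial>P) \<le> \<rho>" unfolding rho_dist_def g_def v_def .
      hence "sqrt (\<integral>z. g z \<partial>P) \<le> 2 * R * \<rho>" using R_pos by (simp add: field_simps)
      moreover have "(\<integral>z. g z \<partial>P) \<ge> 0" unfolding g_def by (rule integral_nonneg_AE) simp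
      ultimately have Ig: "(\<integral>z. g z \<partial>P) \<le> (2 * R * \<rho>)^2"
        by (metis real_sqrt_le_iff real_sqrt_pow2 real_sqrt_unique sqrt_le_D)
      have "(\<integral>z. f c z \<partial>P) \<le> (\<integral>z. g z / (4 * R^2) \<partial>P)"
      proof (rule integral_mono)
        show "integrable P (f c)" by (rule P.integrable_const_bound[where B=1]) (use fb fm in auto)
        show "integrable P (\<lambda>z. g z / (4 * R^2))" using gint by simp
      qed (auto simp: f_def g_def v_def)
      also have "\<dots> = (\<integral>z. g z \<partial>P) / (4 * R^2)" by simp
      also have "\<dots> \<le> (2 * R * \<rho>)^2 / (4 * R^2)" using Ig by (intro divide_right_mono) auto
      also have "\<dots> = \<rho>^2" using R_pos by (simp add: field_simps power2_eq_square)
      finally show ?thesis .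
    qed
    define s0 where "s0 = t + ln (real (card C))"
    define Bad where "Bad c = {S \<in> space M. (exp 1 - 1) * real n * (\<integral>z. f c z \<partial>P) + s0 \<le> (\<Sum>i<n. f c (S i))}" for c
    have Bad_m: "Bad c \<in> sets M" for c
      unfolding Bad_def M_def by (rule sum_event_sets[OF fm])
    have Bad_p: "measure M (Bad c) \<le> exp (- t) / real (card C)" for c
    proof -
      have "measure M (Bad c) \<le> exp (- s0)"
        unfolding Bad_def M_def by (rule chernoff[OF P_prob fm fb])
      also have "exp (- s0) = exp (- t) / real (card C)"
        unfolding s0_def using cardC1 by (simp add: exp_diff exp_minus field_simps)
      finally show ?thesis .
    qed
    define E where "E = G - (\<Union>c\<in>C. Bad c)"
    have UBm: "(\<Union>c\<in>C. Bad c) \<in> sets M" using finC Bad_m by auto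
    have Em: "E \<in> sets M" unfolding E_def using Gm UBm by auto
    have UBp: "measure M (\<Union>c\<in>C. Bad c) \<le> exp (- t)"
    proof -
      have "measure M (\<Union>c\<in>C. Bad c) \<le> (\<Sum>c\<in>C. measure M (Bad c))"
        by (rule M.finite_measure_subadditive_finite) (use finC Bad_m in auto)
      also have "\<dots> \<le> (\<Sum>c\<in>C. exp (- t) / real (card C))" by (intro sum_mono Bad_p)
      also have "\<dots> = exp (- t)" using cardC1 by simp
      finally show ?thesis .
    qed
    have Ep: "measure M E \<ge> 1 - exp (- t)"
    proof -
      have "measure M G \<le> measure M (E \<union> (\<Union>c\<in>C. Bad c))"
        by (rule M.finite_measure_mono) (use Em UBm Gm in \<open>auto simp: E_def intro!: sets.Un\<close>)
      also have "\<dots> \<le> measure M E + measure M (\<Union>c\<in>C. Bad c)" by (rule measure_Un_le[OF Em UBm])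
      finally show ?thesis using G1 UBp by linarith
    qed
    have main: "(\<Sum>i<n. (fst (S i) \<bullet> (w - wstar))^2) \<le> real n * B" if S: "S \<in> E" and w: "w \<in> U" for S w
    proof -
      define c where "c = \<phi> w"
      have cC: "c \<in> C" unfolding c_def C_def using w by blast
      define w' where "w' = r c"
      have w'U: "w' \<in> U" and phi_eq: "\<phi> w' = \<phi> w" using r[OF cC] unfolding w'_def c_def by auto
      define v where "v = w - wstar"
      define v' where "v' = w' - wstar"
      have SG: "S \<in> G" and SnB: "S \<notin> Bad c" using S cC unfolding E_def by auto
      have Sspace: "S \<in> space M" using SG unfolding G_def by auto
      have xi: "norm (fst (S i)) \<le> 1" if "i < n" for i using SG that unfolding G_def by auto
      have close: "norm (v - v')^2 \<le> D * h^2"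
      proof -
        have cb: "((v - v') \<bullet> b)^2 \<le> h^2" if b: "b \<in> Basis" for b
        proof -
          have "\<phi> w' b = \<phi> w b" using phi_eq by simp
          hence "\<lfloor>(v \<bullet> b) / h\<rfloor> = \<lfloor>(v' \<bullet> b) / h\<rfloor>" using b unfolding \<phi>_def v_def v'_def by simp
          hence "\<bar>v \<bullet> b - v' \<bullet> b\<bar> \<le> h" by (rule floor_close[OF h0])
          hence "\<bar>(v - v') \<bullet> b\<bar> \<le> h" by (simp add: inner_diff_left)
          hence "\<bar>(v - v') \<bullet> b\<bar>^2 \<le> h^2" by (rule power_mono) simp
          thus ?thesis by simp
        qed
        have "norm (v - v')^2 = (v - v') \<bullet> (v - v')" by (rule power2_norm_eq_inner)
        also have "\<dots> = (\<Sum>b\<in>Basis. ((v - v') \<bullet> b) * ((v - v') \<bullet> b))" by (rule euclidean_inner)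
        also have "\<dots> = (\<Sum>b\<in>Basis. ((v - v') \<bullet> b)^2)" by (simp add: power2_eq_square)
        also have "\<dots> \<le> (\<Sum>b\<in>(Basis::'a set). h^2)" by (intro sum_mono cb)
        also have "\<dots> = D * h^2" unfolding D_def by simp
        finally show ?thesis .
      qed
      have v'n: "norm v' \<le> 2 * R" using vnorm[OF w'U] unfolding v'_def .
      have termi: "(fst (S i) \<bullet> v)^2 \<le> 7/5 * (4 * R^2 * f c (S i)) + 7/2 * (D * h^2)" if i: "i < n" for i
      proof -
        define x where "x = fst (S i)"
        have eq: "x \<bullet> v = x \<bullet> v' + x \<bullet> (v - v')" by (simp add: inner_diff_right)
        have a1: "(x \<bullet> v')^2 \<le> 4 * R^2"
        proof -
          have "norm x * norm v' \<le> 1 * (2 * R)" using xi[OF i] v'n unfolding x_def by (intro mult_mono) auto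
          hence "(norm x * norm v')^2 \<le> (2 * R)^2" by (intro power_mono) auto
          hence "(x \<bullet> v')^2 \<le> (2 * R)^2" by (rule order_trans[OF term_bd])
          thus ?thesis by (simp add: power_mult_distrib)
        qed
        have le1: "(x \<bullet> v')^2 / (4 * R^2) \<le> 1" using a1 R_pos by simp
        have fa: "4 * R^2 * f c (S i) = (x \<bullet> v')^2"
          unfolding f_def w'_def[symmetric] v'_def[symmetric] x_def[symmetric]
          using le1 R_pos by (simp add: min_absorb2)
        have b1: "(x \<bullet> (v - v'))^2 \<le> D * h^2"
        proof -
          have "norm x * norm (v - v') \<le> 1 * norm (v - v')" using xi[OF i] unfolding x_def by (intro mult_right_mono) auto
          hence "(norm x * norm (v - v'))^2 \<le> (1 * norm (v - v'))^2" by (intro power_mono) auto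
          hence "(x \<bullet> (v - v'))^2 \<le> (1 * norm (v - v'))^2" by (rule order_trans[OF term_bd])
          thus ?thesis using close by simp
        qed
        have "(x \<bullet> v)^2 \<le> 7/5 * (x \<bullet> v')^2 + 7/2 * (x \<bullet> (v - v'))^2" unfolding eq by (rule sq_split)
        thus ?thesis using fa b1 unfolding x_def by linarith
      qed
      have e1: "exp 1 - 1 \<le> (25/14::real)" using e_le by simp
      have sumf: "(\<Sum>i<n. f c (S i)) \<le> (exp 1 - 1) * real n * \<rho>^2 + t + D * ln (2 * real n + 1)"
      proof -
        have A: "(\<Sum>i<n. f c (S i)) < (exp 1 - 1) * real n * (\<integral>z. f c z \<partial>P) + s0"
          using SnB Sspace unfolding Bad_def by auto
        have "0 \<le> exp 1 - (1::real)" by simp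
        hence B: "(exp 1 - 1) * real n * (\<integral>z. f c z \<partial>P) \<le> (exp 1 - 1) * real n * \<rho>^2"
          using mu[OF cC] by (intro mult_left_mono) auto
        have C: "s0 \<le> t + D * ln (2 * real n + 1)"
        proof -
          have "ln (real (card C)) \<le> ln ((2 * real n + 1) ^ DIM('a))"
            using cardC cardC1 by (subst ln_le_cancel_iff) auto
          also have "\<dots> = D * ln (2 * real n + 1)" unfolding D_def by (simp add: ln_realpow)
          finally show ?thesis unfolding s0_def by simp
        qed
        show ?thesis using A B C by linarith
      qed
      have "(\<Sum>i<n. (fst (S i) \<bullet> v)^2) \<le> (\<Sum>i<n. 7/5 * (4 * R^2 * f c (S i)) + 7/2 * (D * h^2))"
        by (intro sum_mono termi) auto
      also have "\<dots> = 28/5 * R^2 * (\<Sum>i<n. f c (S i)) + real n * (7/2 * D * h^2)"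
        by (simp add: sum.distrib sum_distrib_left algebra_simps)
      also have "\<dots> \<le> 28/5 * R^2 * ((exp 1 - 1) * real n * \<rho>^2 + t + D * ln (2 * real n + 1)) + real n * (7/2 * D * h^2)"
        using sumf R_pos by (intro add_right_mono mult_left_mono) auto
      also have "\<dots> \<le> real n * B"
      proof -
        have nh: "real n * (7/2 * D * h^2) = R^2 * (14 * D / real n)"
          unfolding h_def using n0 by (simp add: field_simps power2_eq_square)
        have nB: "real n * B = R^2 * (10 * (real n * \<rho>^2 + t + 1 + D * ln (real n)))"
          unfolding B_def D_def using n0 by (simp add: field_simps)
        have bn: "7/5 * ln (2 * real n + 1) + 7 / (2 * real n) \<le> 5/2 * ln (real n)" by (rule big_n[OF n8])
        have bnD: "D * (7/5 * ln (2 * real n + 1) + 7 / (2 * real n)) \<le> D * (5/2 * ln (real n))"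
          using D1 by (intro mult_left_mono[OF bn]) auto
        have bnD': "28/5 * (D * ln (2 * real n + 1)) + 14 * D / real n \<le> 10 * (D * ln (real n))"
          using bnD n0 by (simp add: field_simps)
        have r0: "0 \<le> real n * \<rho>^2" by simp
        have ee: "28/5 * ((exp 1 - 1) * (real n * \<rho>^2)) \<le> 10 * (real n * \<rho>^2)"
          using mult_right_mono[OF e1 r0] by (simp add: algebra_simps)
        have K: "28/5 * ((exp 1 - 1) * real n * \<rho>^2 + t + D * ln (2 * real n + 1)) + 14 * D / real n
            \<le> 10 * (real n * \<rho>^2 + t + 1 + D * ln (real n))"
          using bnD' ee t_pos by (simp add: algebra_simps)
        have "28/5 * R^2 * ((exp 1 - 1) * real n * \<rho>^2 + t + D * ln (2 * real n + 1)) + real n * (7/2 * D * h^2)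
            = R^2 * (28/5 * ((exp 1 - 1) * real n * \<rho>^2 + t + D * ln (2 * real n + 1)) + 14 * D / real n)"
          unfolding nh by (simp add: algebra_simps)
        also have "\<dots> \<le> R^2 * (10 * (real n * \<rho>^2 + t + 1 + D * ln (real n)))"
          using K by (intro mult_left_mono) auto
        finally show ?thesis unfolding nB .
      qed
      finally show ?thesis unfolding v_def .
    qed

    show ?thesis
    proof (intro bexI[of _ E] conjI ballI)
      show "E \<in> sets (PiM {..<n} (\<lambda>_. P))" using Em by (simp add: M_def)
      show "measure (PiM {..<n} (\<lambda>_. P)) E \<ge> 1 - exp (- t)" using Ep by (simp add: M_def)
      fix S assume "S \<in> E"
      show "(1 / real n) * (SUP w \<in> {w. norm w \<le> R \<and> rho_dist P R wstar w \<le> \<rho>}.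
                  (\<Sum>i<n. (fst (S i) \<bullet> (w - wstar))^2))
              \<le> 10 * R^2 * (\<rho>^2 + (t + 1 + real DIM('a) * ln (real n)) / real n)"
        unfolding U_def[symmetric] B_def[symmetric]
        by (rule sup_bound[OF Une n_pos main[OF \<open>S \<in> E\<close>]])
    qed
  qed
qed

end
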